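(* Let $n\ge3$ be an integer, let $z>0$ satisfy $z+\sigma^2-2D\ge0$ and $h(z)\le1$, and let $x^n\in\mathbb R^n$ with $\frac1n\|x^n\|^2=z$. If $Y^n$ is uniformly distributed on the sphere $\{y^n\in\mathbb R^n:\|y^n\|^2=n(\sigma^2-D)\}$, then $$\Pr\{\|x^n-Y^n\|^2\le nD\}\le\frac{1}{\sqrt\pi}\,\frac{\Gamma(\frac n2)}{\Gamma(\frac{n-1}{2})}\,\big(1-h(z)\big)^{\frac{n-3}{2}}.$$
   Context: Fix $\sigma^2>D>0$ and let $P_Y:=\sigma^2-D$. For $z>0$ define $h(z):=\frac{(z+P_Y-D)^2}{4zP_Y}$. $\Gamma$ is the Gamma function. *)

theory Defs
  imports "HOL-Analysis.Analysis"
begin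

definition hfun :: "real \<Rightarrow> real \<Rightarrow> real \<Rightarrow> real" where
  "hfun \<sigma> D z = (let PY = \<sigma>\<^sup>2 - D in (z + PY - D)\<^sup>2 / (4 * z * PY))"

text \<open>Uniform (normalized surface / cone) probability measure on the sphere of
  radius r centred at 0: the push-forward of the uniform distribution on the
  ball of radius r under radial projection v \<mapsto> (r / |v|) v.\<close>
definition unif_sphere :: "real \<Rightarrow> 'a::euclidean_space measure" where
  "unif_sphere r = distr (uniform_measure lborel (ball 0 r)) borel (\<lambda>v. (r / norm v) *\<^sub>R v)"

end

theory Submission
  imports Defs "HOL-Analysis.Analysis"
begin

lemma ball_aux_le:
  assumes "finite A" "A \<noteq> {}" "\<rho> \<ge> 0"
  shows "emeasure (Pi\<^sub>M A (\<lambda>_. lborel))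
             ({f. sqrt (\<Sum>i\<in>A. (f i)\<^sup>2) \<le> \<rho>} \<inter> space (Pi\<^sub>M A (\<lambda>_. lborel))) \<le>
             ennreal (unit_ball_vol (real (card A)) * \<rho> ^ card A)"
proof (cases "\<rho> = 0")
  case False
  then show ?thesis using assms by (subst emeasure_cball_aux) auto
next
  case True
  have k: "card A \<ge> 1" using assms by (simp add: Suc_leI card_gt_0_iff)
  define V where "V = unit_ball_vol (real (card A))"
  have V: "V > 0" unfolding V_def by simp
  show ?thesis
  proof (rule ennreal_le_epsilon)
    fix e :: real assume e: "e > 0"
    define \<epsilon> where "\<epsilon> = min 1 (e / V)"
    have ep: "\<epsilon> > 0" "\<epsilon> \<le> 1" "\<epsilon> \<le> e / V" using e V by (auto simp: \<epsilon>_def)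
    have "\<epsilon> ^ card A \<le> \<epsilon>" using power_decreasing[of 1 "card A" \<epsilon>] ep k by simp
    then have "V * \<epsilon> ^ card A \<le> e" using ep V by (smt (verit) mult_left_mono pos_le_divide_eq mult.commute)
    have "emeasure (Pi\<^sub>M A (\<lambda>_. lborel))
             ({f. sqrt (\<Sum>i\<in>A. (f i)\<^sup>2) \<le> \<rho>} \<inter> space (Pi\<^sub>M A (\<lambda>_. lborel))) \<le>
          emeasure (Pi\<^sub>M A (\<lambda>_. lborel))
             ({f. sqrt (\<Sum>i\<in>A. (f i)\<^sup>2) \<le> \<epsilon>} \<inter> space (Pi\<^sub>M A (\<lambda>_. lborel)))"
      using True ep by (intro emeasure_mono) (auto intro: order_trans[OF real_sqrt_le_mono[of _ 0]])
    also have "\<dots> = ennreal (V * \<epsilon> ^ card A)" using assms ep unfolding V_def by (subst emeasure_cball_aux) auto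
    also have "\<dots> \<le> ennreal e" using \<open>V * \<epsilon> ^ card A \<le> e\<close> by (rule ennreal_leI)
    finally show "emeasure (Pi\<^sub>M A (\<lambda>_. lborel))
             ({f. sqrt (\<Sum>i\<in>A. (f i)\<^sup>2) \<le> \<rho>} \<inter> space (Pi\<^sub>M A (\<lambda>_. lborel)))
       \<le> ennreal (unit_ball_vol (real (card A)) * \<rho> ^ card A) + ennreal e" using True k by (simp add: power_0_left)
  qed
qed

lemma poly_int:
  assumes "r > 0"
  shows "(\<integral>\<^sup>+y. ennreal (r\<^sup>2 - y\<^sup>2) * indicator {0..r} y \<partial>lborel) = ennreal (2/3 * r^3)"
proof -
  have "((\<lambda>y. r\<^sup>2 - y\<^sup>2) has_integral ((\<lambda>y. r\<^sup>2 * y - y^3/3) r - (\<lambda>y. r\<^sup>2 * y - y^3/3) 0)) {0..r}"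
    using assms
    by (intro fundamental_theorem_of_calculus)
       (auto intro!: derivative_eq_intros simp: has_real_derivative_iff_has_vector_derivative[symmetric] power2_eq_square)
  then have "((\<lambda>y. r\<^sup>2 - y\<^sup>2) has_integral (2/3 * r^3)) {0..r}"
    by (simp add: power2_eq_square power3_eq_cube algebra_simps)
  then show ?thesis
    by (intro nn_integral_has_integral_lebesgue') (auto simp: abs_le_square_iff power_mono)
qed

lemma slice_bound:
  assumes c: "0 \<le> c" "c \<le> 1" and r: "r > 0" and s: "s = sqrt (1 - c\<^sup>2)"
    and W: "W \<ge> 0" and h1: "sqrt (y\<^sup>2 + W) \<le> r" and h2: "c * sqrt (y\<^sup>2 + W) \<le> y"
  shows "0 \<le> y \<and> y \<le> r \<and> W \<le> r\<^sup>2 - y\<^sup>2 \<and> W \<le> (r * s)\<^sup>2"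
proof -
  have "0 \<le> c * sqrt (y\<^sup>2 + W)" using c W by simp
  then have y0: "0 \<le> y" using h2 by linarith
  have a: "y\<^sup>2 + W \<le> r\<^sup>2" using h1 r W by (simp add: real_sqrt_le_iff')
  have "y\<^sup>2 \<le> r\<^sup>2" using a W by linarith
  then have yr: "y \<le> r" using r y0 by (simp add: power2_le_iff_abs_le)
  have b: "c\<^sup>2 * (y\<^sup>2 + W) \<le> y\<^sup>2"
  proof -
    have "(c * sqrt (y\<^sup>2 + W))\<^sup>2 \<le> y\<^sup>2" using h2 c W by (intro power_mono) auto
    then show ?thesis using W by (simp add: power_mult_distrib)
  qed
  have "c\<^sup>2 \<le> 1" using c by (simp add: power_le_one)
  then have s2: "s\<^sup>2 = 1 - c\<^sup>2" using s by simp
  have "W \<le> r\<^sup>2 * s\<^sup>2"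
  proof (cases "y \<ge> c * r")
    case True
    have "(c*r)\<^sup>2 \<le> y\<^sup>2" using True c r by (intro power_mono) auto
    moreover have "r\<^sup>2 * s\<^sup>2 = r\<^sup>2 - (c*r)\<^sup>2" 
    proof -
      have "r\<^sup>2 * s\<^sup>2 = r\<^sup>2 * (1 - c\<^sup>2)" by (simp add: s2)
      then show ?thesis by (simp add: power_mult_distrib right_diff_distrib mult.commute)
    qed
    ultimately show ?thesis using a by linarith
  next
    case False
    then have "y\<^sup>2 \<le> (c*r)\<^sup>2" using y0 by (intro power_mono) auto
    then have m: "y\<^sup>2 * s\<^sup>2 \<le> (c*r)\<^sup>2 * s\<^sup>2" by (simp add: mult_right_mono)
    have "y\<^sup>2 * s\<^sup>2 = y\<^sup>2 - c\<^sup>2 * y\<^sup>2" using s2 by (simp add: right_diff_distrib)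
    then have "c\<^sup>2 * W \<le> y\<^sup>2 * s\<^sup>2" using b by (simp add: algebra_simps)
    then have "c\<^sup>2 * W \<le> c\<^sup>2 * (r\<^sup>2 * s\<^sup>2)" using m by (simp add: power_mult_distrib algebra_simps)
    moreover have "c > 0" using False y0 r c by (cases "c = 0") auto
    ultimately show ?thesis by simp
  qed
  then show ?thesis using y0 yr a by (simp add: power_mult_distrib)
qed

lemma sector_PiM:
  assumes fin: "finite B" and e: "e \<in> B" and m: "card B \<ge> 3" and r: "r > 0"
    and c: "0 \<le> c" "c \<le> 1" and s: "s = sqrt (1 - c\<^sup>2)"
  shows "emeasure (Pi\<^sub>M B (\<lambda>_. lborel))
      ({f. sqrt (\<Sum>i\<in>B. (f i)\<^sup>2) \<le> r \<and> c * sqrt (\<Sum>i\<in>B. (f i)\<^sup>2) \<le> f e} \<inter> space (Pi\<^sub>M B (\<lambda>_. lborel)))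
    \<le> ennreal (unit_ball_vol (real (card B - 1)) * (r * s)^(card B - 3) * (2 / 3 * r ^ 3))"
proof -
  interpret product_sigma_finite "\<lambda>_. lborel" by standard
  define A where "A = B - {e}"
  have BA: "B = insert e A" and eA: "e \<notin> A" and finA: "finite A" using e fin by (auto simp: A_def)
  have cardA: "card A = card B - 1" using e fin by (simp add: A_def)
  define k where "k = card A"
  have k2: "k \<ge> 2" using m cardA k_def by simp
  have Ane: "A \<noteq> {}" using k2 k_def by auto
  have s0: "s \<ge> 0" using s c by (simp add: power_le_one)
  define V where "V = unit_ball_vol (real k)"
  have V0: "V \<ge> 0" by (simp add: V_def)
  define \<rho> where "\<rho> = (\<lambda>y::real. sqrt (min (r\<^sup>2 - y\<^sup>2) ((r * s)\<^sup>2)))"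
  define S where "S = {f. sqrt (\<Sum>i\<in>B. (f i)\<^sup>2) \<le> r \<and> c * sqrt (\<Sum>i\<in>B. (f i)\<^sup>2) \<le> f e} \<inter> space (Pi\<^sub>M B (\<lambda>_. lborel))"
  have Smeas: "S \<in> sets (Pi\<^sub>M B (\<lambda>_. lborel))"
  proof -
    have me: "(\<lambda>x. x e) \<in> borel_measurable (Pi\<^sub>M B (\<lambda>_. lborel))"
      using measurable_component_singleton[OF e, of "\<lambda>_. lborel"] by simp
    have mc: "(\<lambda>x. x i) \<in> borel_measurable (Pi\<^sub>M B (\<lambda>_. lborel))" if "i \<in> B" for i
      using measurable_component_singleton[OF that, of "\<lambda>_. lborel"] by simp
    have g: "(\<lambda>x. sqrt (\<Sum>i\<in>B. (x i)\<^sup>2)) \<in> borel_measurable (Pi\<^sub>M B (\<lambda>_. lborel))"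
      by (intro borel_measurable_continuous_on[where f=sqrt] borel_measurable_sum borel_measurable_power mc continuous_intros) auto
    have "S = {f \<in> space (Pi\<^sub>M B (\<lambda>_. lborel)). sqrt (\<Sum>i\<in>B. (f i)\<^sup>2) \<le> r} \<inter> {f \<in> space (Pi\<^sub>M B (\<lambda>_. lborel)). c * sqrt (\<Sum>i\<in>B. (f i)\<^sup>2) \<le> f e}"
      unfolding S_def by auto
    also have "\<dots> \<in> sets (Pi\<^sub>M B (\<lambda>_. lborel))"
      using g me by (intro sets.Int borel_measurable_le borel_measurable_const borel_measurable_times) auto
    finally show ?thesis .
  qed
  have "emeasure (Pi\<^sub>M B (\<lambda>_. lborel)) S = (\<integral>\<^sup>+f. indicator S f \<partial>Pi\<^sub>M B (\<lambda>_. lborel))"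
    using Smeas by simp
  also have "\<dots> = (\<integral>\<^sup>+y. \<integral>\<^sup>+x. indicator S (x(e := y)) \<partial>Pi\<^sub>M A (\<lambda>_. lborel) \<partial>lborel)"
    unfolding BA using finA eA Smeas[unfolded BA] by (subst product_nn_integral_insert_rev) auto
  also have "\<dots> \<le> (\<integral>\<^sup>+y. ennreal (V * (r * s)^(k-2)) * (ennreal (r\<^sup>2 - y\<^sup>2) * indicator {0..r} y) \<partial>lborel)"
  proof (intro nn_integral_mono)
    fix y :: real
    have "(\<integral>\<^sup>+x. indicator S (x(e := y)) \<partial>Pi\<^sub>M A (\<lambda>_. lborel)) \<le>
          (\<integral>\<^sup>+x. indicator {0..r} y * indicator ({f. sqrt (\<Sum>i\<in>A. (f i)\<^sup>2) \<le> \<rho> y} \<inter> space (Pi\<^sub>M A (\<lambda>_. lborel))) x \<partial>Pi\<^sub>M A (\<lambda>_. lborel))"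
    proof (intro nn_integral_mono)
      fix x :: "_ \<Rightarrow> real" assume x: "x \<in> space (Pi\<^sub>M A (\<lambda>_. lborel))"
      show "(indicator S (x(e := y)) :: ennreal) \<le> indicator {0..r} y * indicator ({f. sqrt (\<Sum>i\<in>A. (f i)\<^sup>2) \<le> \<rho> y} \<inter> space (Pi\<^sub>M A (\<lambda>_. lborel))) x"
      proof (cases "x(e := y) \<in> S")
        case False then show ?thesis by simp
      next
        case True
        have sumB: "(\<Sum>i\<in>B. ((x(e := y)) i)\<^sup>2) = y\<^sup>2 + (\<Sum>i\<in>A. (x i)\<^sup>2)"
          unfolding BA using finA eA by (simp add: sum.insert) (intro sum.cong, auto)
        define W where "W = (\<Sum>i\<in>A. (x i)\<^sup>2)"
        have W0: "W \<ge> 0" unfolding W_def by (simp add: sum_nonneg)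
        have h: "sqrt (y\<^sup>2 + W) \<le> r" "c * sqrt (y\<^sup>2 + W) \<le> y"
        proof -
          have "sqrt (\<Sum>i\<in>B. ((x(e := y)) i)\<^sup>2) \<le> r \<and> c * sqrt (\<Sum>i\<in>B. ((x(e := y)) i)\<^sup>2) \<le> (x(e := y)) e"
            using True unfolding S_def by blast
          then show "sqrt (y\<^sup>2 + W) \<le> r" "c * sqrt (y\<^sup>2 + W) \<le> y"
            by (simp_all only: sumB fun_upd_same W_def)
        qed
        from slice_bound[OF c r s W0 h]
        have b: "0 \<le> y" "y \<le> r" "W \<le> r\<^sup>2 - y\<^sup>2" "W \<le> (r * s)\<^sup>2" by auto
        have "sqrt W \<le> \<rho> y" unfolding \<rho>_def using b by simp
        then show ?thesis using b x unfolding W_def by (simp add: indicator_def)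
      qed
    qed
    also have "\<dots> = indicator {0..r} y * emeasure (Pi\<^sub>M A (\<lambda>_. lborel)) ({f. sqrt (\<Sum>i\<in>A. (f i)\<^sup>2) \<le> \<rho> y} \<inter> space (Pi\<^sub>M A (\<lambda>_. lborel)))"
      by (subst nn_integral_cmult) auto
    also have "\<dots> \<le> ennreal (V * (r * s)^(k-2)) * (ennreal (r\<^sup>2 - y\<^sup>2) * indicator {0..r} y)"
    proof (cases "y \<in> {0..r}")
      case False then show ?thesis by simp
    next
      case True
      have yy: "y\<^sup>2 \<le> r\<^sup>2" using True by (intro power_mono) auto
      have rho0: "\<rho> y \<ge> 0" unfolding \<rho>_def using yy by simp
      have "emeasure (Pi\<^sub>M A (\<lambda>_. lborel)) ({f. sqrt (\<Sum>i\<in>A. (f i)\<^sup>2) \<le> \<rho> y} \<inter> space (Pi\<^sub>M A (\<lambda>_. lborel)))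
            \<le> ennreal (V * \<rho> y ^ k)" unfolding V_def k_def using ball_aux_le[OF finA Ane rho0] .
      also have "\<dots> \<le> ennreal (V * ((r * s)^(k-2) * (r\<^sup>2 - y\<^sup>2)))"
      proof (intro ennreal_leI mult_left_mono V0)
        have r1: "\<rho> y \<le> r * s"
        proof -
          have "\<rho> y \<le> sqrt ((r * s)\<^sup>2)" unfolding \<rho>_def by (rule real_sqrt_le_mono) simp
          also have "\<dots> = r * s" using r s0 by simp
          finally show ?thesis .
        qed
        have r2: "(\<rho> y)\<^sup>2 \<le> r\<^sup>2 - y\<^sup>2" unfolding \<rho>_def using True r power_mono[of y r 2]
          by simp
        have "\<rho> y ^ k = \<rho> y ^ (k-2) * (\<rho> y)\<^sup>2" using k2
          by (metis le_add_diff_inverse2 power_add)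
        also have "\<dots> \<le> (r * s)^(k-2) * (r\<^sup>2 - y\<^sup>2)"
          using r1 r2 rho0 r s0 by (intro mult_mono power_mono) auto
        finally show "\<rho> y ^ k \<le> (r * s)^(k-2) * (r\<^sup>2 - y\<^sup>2)" .
      qed
      also have "\<dots> = ennreal (V * (r * s)^(k-2)) * (ennreal (r\<^sup>2 - y\<^sup>2) * indicator {0..r} y)"
        using True yy V0 r s0 by (simp add: ennreal_mult'[symmetric] mult.assoc)
      finally show ?thesis using True by simp
    qed
    finally show "(\<integral>\<^sup>+x. indicator S (x(e := y)) \<partial>Pi\<^sub>M A (\<lambda>_. lborel)) \<le> ennreal (V * (r * s)^(k-2)) * (ennreal (r\<^sup>2 - y\<^sup>2) * indicator {0..r} y)" .
  qed
  also have "\<dots> = ennreal (V * (r * s)^(k-2)) * ennreal (2/3 * r^3)"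
    using poly_int[OF r] by (subst nn_integral_cmult) auto
  also have "\<dots> = ennreal (unit_ball_vol (real (card B - 1)) * (r * s)^(card B - 3) * (2 / 3 * r ^ 3))"
  proof -
    have kk: "k - 2 = card B - 3" using cardA k_def m by simp
    show ?thesis using V0 r s0 cardA k_def V_def kk by (simp add: ennreal_mult'[symmetric])
  qed
  finally show ?thesis unfolding S_def .
qed

lemma sector_euclid:
  fixes e :: "'a::euclidean_space"
  assumes e: "e \<in> Basis" and m: "DIM('a) \<ge> 3" and r: "r > 0"
    and c: "0 \<le> c" "c \<le> 1" and s: "s = sqrt (1 - c\<^sup>2)"
  shows "emeasure lborel {v::'a. norm v \<le> r \<and> c * norm v \<le> v \<bullet> e}
    \<le> ennreal (unit_ball_vol (real (DIM('a) - 1)) * (r * s)^(DIM('a) - 3) * (2 / 3 * r ^ 3))"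
proof -
  have meas: "{v::'a. norm v \<le> r \<and> c * norm v \<le> v \<bullet> e} \<in> sets borel"
  proof -
    have "{v::'a. norm v \<le> r \<and> c * norm v \<le> v \<bullet> e} = {v \<in> space borel. norm v \<le> r} \<inter> {v \<in> space borel. c * norm v \<le> v \<bullet> e}"
      by auto
    also have "\<dots> \<in> sets borel"
      by (intro sets.Int borel_measurable_le borel_measurable_const borel_measurable_times borel_measurable_norm borel_measurable_inner) auto
    finally show ?thesis .
  qed
  have nrm: "norm (\<Sum>b\<in>Basis. f b *\<^sub>R b :: 'a) = sqrt (\<Sum>i\<in>Basis. (f i)\<^sup>2)" for f
    using euclidean_dist_l2[of 0 "\<Sum>b\<in>Basis. f b *\<^sub>R b :: 'a"] by (simp add: L2_set_def)
  have inn: "(\<Sum>b\<in>Basis. f b *\<^sub>R b :: 'a) \<bullet> e = f e" for f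
    using e by (simp add: inner_sum_left inner_Basis if_distrib cong: if_cong)
  have eq: "(lborel :: 'a measure) = distr (Pi\<^sub>M Basis (\<lambda>_. lborel)) borel (\<lambda>f. \<Sum>b\<in>Basis. f b *\<^sub>R b)"
    by (rule lborel_eq)
  have "emeasure lborel {v::'a. norm v \<le> r \<and> c * norm v \<le> v \<bullet> e}
     = emeasure (distr (Pi\<^sub>M Basis (\<lambda>_. lborel)) borel (\<lambda>f. \<Sum>b\<in>Basis. f b *\<^sub>R b)) {v::'a. norm v \<le> r \<and> c * norm v \<le> v \<bullet> e}"
    by (metis eq)
  also have "\<dots> = emeasure (Pi\<^sub>M Basis (\<lambda>_. lborel)) ((\<lambda>f. \<Sum>b\<in>Basis. f b *\<^sub>R b :: 'a) -` {v::'a. norm v \<le> r \<and> c * norm v \<le> v \<bullet> e} \<inter> space (Pi\<^sub>M Basis (\<lambda>_. lborel)))"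
    using meas by (subst emeasure_distr) auto
  also have "(\<lambda>f. \<Sum>b\<in>Basis. f b *\<^sub>R b :: 'a) -` {v::'a. norm v \<le> r \<and> c * norm v \<le> v \<bullet> e}
     = {f. sqrt (\<Sum>i\<in>Basis. (f i)\<^sup>2) \<le> r \<and> c * sqrt (\<Sum>i\<in>Basis. (f i)\<^sup>2) \<le> f e}"
    by (auto simp: nrm inn)
  also have "emeasure (Pi\<^sub>M Basis (\<lambda>_. lborel)) (\<dots> \<inter> space (Pi\<^sub>M Basis (\<lambda>_. lborel)))
     \<le> ennreal (unit_ball_vol (real (card (Basis::'a set) - 1)) * (r * s)^(card (Basis::'a set) - 3) * (2 / 3 * r ^ 3))"
    by (rule sector_PiM[OF finite_Basis e _ r c s]) (use m in simp)
  finally show ?thesis by simp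
qed

typedef 'a wo = "UNIV :: 'a set" morphisms rep_wo abs_wo by auto

definition idx :: "'a::finite \<Rightarrow> nat" where "idx = (SOME f. inj f)"

lemma inj_idx: "inj (idx :: 'a::finite \<Rightarrow> nat)"
proof -
  have "\<exists>f::'a \<Rightarrow> nat. inj f"
    using finite_imp_inj_to_nat_seg[of "UNIV :: 'a set"] by (auto simp: inj_on_def)
  then show ?thesis unfolding idx_def by (rule someI_ex)
qed

instantiation wo :: (finite) linorder
begin
definition less_eq_wo :: "'a wo \<Rightarrow> 'a wo \<Rightarrow> bool" where "less_eq_wo x y = (idx (rep_wo x) \<le> idx (rep_wo y))"
definition less_wo :: "'a wo \<Rightarrow> 'a wo \<Rightarrow> bool" where "less_wo x y = (idx (rep_wo x) < idx (rep_wo y))"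
instance
proof
  fix x y :: "'a wo"
  assume "x \<le> y" "y \<le> x"
  then have "idx (rep_wo x) = idx (rep_wo y)" by (simp add: less_eq_wo_def)
  then show "x = y" using inj_idx rep_wo_inject by (metis injD)
qed (auto simp: less_eq_wo_def less_wo_def)
end

instance wo :: (finite) finite
proof
  have "UNIV = range (abs_wo :: 'a \<Rightarrow> 'a wo)" by (metis abs_wo_cases surj_def)
  then show "finite (UNIV :: 'a wo set)" by (metis finite finite_imageI)
qed

instance wo :: (finite) wellorder
proof -
  have "wf {(x :: 'a wo, y). x < y}"
  proof -
    have "{(x :: 'a wo, y). x < y} = inv_image {(a, b). a < b} (\<lambda>x. idx (rep_wo x))"
      by (auto simp: less_wo_def)
    then show ?thesis using wf_less by (metis wf_inv_image)
  qed
  then show "OFCLASS('a wo, wellorder_class)" by (rule wf_wellorderI) intro_classes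
qed

lemma card_wo: "CARD('a::finite wo) = CARD('a)"
proof -
  have "bij_betw abs_wo (UNIV :: 'a set) (UNIV :: 'a wo set)"
    by (metis abs_wo_inverse bij_betw_def inj_on_inverseI iso_tuple_UNIV_I type_definition.Abs_image type_definition_wo)
  then show ?thesis by (simp add: bij_betw_same_card)
qed

definition tow :: "real^'n::finite \<Rightarrow> real^('n wo)" where "tow v = (\<chi> j. v $ rep_wo j)"
definition fromw :: "real^('n::finite wo) \<Rightarrow> real^'n" where "fromw w = (\<chi> i. w $ abs_wo i)"

lemma bij_rep_wo: "bij_betw rep_wo (UNIV :: 'a wo set) (UNIV :: 'a set)"
  by (rule bij_betwI[where g=abs_wo]) (auto simp: rep_wo_inverse abs_wo_inverse)

lemma fromw_tow[simp]: "fromw (tow v) = v"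
  by (simp add: fromw_def tow_def abs_wo_inverse vec_eq_iff)

lemma tow_fromw[simp]: "tow (fromw w) = w"
  by (simp add: fromw_def tow_def rep_wo_inverse vec_eq_iff)

lemma inner_fromw: "fromw w \<bullet> fromw w' = w \<bullet> w'"
proof -
  have "fromw w \<bullet> fromw w' = (\<Sum>i\<in>UNIV. w $ abs_wo i * w' $ abs_wo i)"
    by (simp add: inner_vec_def fromw_def)
  also have "\<dots> = (\<Sum>j\<in>UNIV. w $ j * w' $ j)"
  proof -
    have "bij_betw abs_wo (UNIV :: 'a set) (UNIV :: 'a wo set)"
      by (rule bij_betwI[where g=rep_wo]) (auto simp: rep_wo_inverse abs_wo_inverse)
    then show ?thesis by (rule sum.reindex_bij_betw)
  qed
  also have "\<dots> = w \<bullet> w'" by (simp add: inner_vec_def)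
  finally show ?thesis .
qed

lemma norm_fromw: "norm (fromw w) = norm w"
  by (simp add: norm_eq_sqrt_inner inner_fromw)

lemma inner_tow: "tow v \<bullet> tow v' = v \<bullet> v'"
  by (metis fromw_tow inner_fromw)

lemma norm_tow: "norm (tow v) = norm v"
  by (metis fromw_tow norm_fromw)

lemma fromw_meas: "fromw \<in> borel_measurable (borel :: (real^('n::finite wo)) measure)"
proof -
  have "linear (fromw :: real^('n wo) \<Rightarrow> real^'n)"
    by (rule linearI) (simp_all add: fromw_def vec_eq_iff)
  then have "continuous_on UNIV (fromw :: real^('n wo) \<Rightarrow> real^'n)"
    by (simp add: linear_continuous_on linear_linear)
  then show ?thesis by (rule borel_measurable_continuous_onI)
qed

lemma prod_Basis_cart: "(\<Prod>b\<in>Basis. (u - l) \<bullet> b) = (\<Prod>i\<in>UNIV. u $ i - l $ i)"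
  for u l :: "real^'n::finite"
  by (simp add: Basis_vec_def axis_eq_axis prod.UNION_disjoint inner_axis inner_axis')

lemma lborel_fromw: "distr lborel borel fromw = (lborel :: (real^'n::finite) measure)"
proof (rule lborel_eqI[symmetric])
  fix l u :: "real^'n" assume le: "\<And>b. b \<in> Basis \<Longrightarrow> l \<bullet> b \<le> u \<bullet> b"
  have "fromw -` box l u = box (tow l) (tow u)"
  proof (rule set_eqI)
    fix x :: "real^('n wo)"
    have "(\<forall>i. l $ i < x $ abs_wo i \<and> x $ abs_wo i < u $ i) \<longleftrightarrow> (\<forall>j. l $ rep_wo j < x $ j \<and> x $ j < u $ rep_wo j)"
    proof
      assume H: "\<forall>i. l $ i < x $ abs_wo i \<and> x $ abs_wo i < u $ i"
      show "\<forall>j. l $ rep_wo j < x $ j \<and> x $ j < u $ rep_wo j"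
      proof
        fix j show "l $ rep_wo j < x $ j \<and> x $ j < u $ rep_wo j" using H[rule_format, of "rep_wo j"] by (simp add: rep_wo_inverse)
      qed
    next
      assume H: "\<forall>j. l $ rep_wo j < x $ j \<and> x $ j < u $ rep_wo j"
      show "\<forall>i. l $ i < x $ abs_wo i \<and> x $ abs_wo i < u $ i"
      proof
        fix i show "l $ i < x $ abs_wo i \<and> x $ abs_wo i < u $ i" using H[rule_format, of "abs_wo i"] by (simp add: abs_wo_inverse)
      qed
    qed
    then show "x \<in> fromw -` box l u \<longleftrightarrow> x \<in> box (tow l) (tow u)"
      by (simp add: mem_box_cart fromw_def tow_def)
  qed
  moreover have "emeasure (distr lborel borel fromw) (box l u) = emeasure lborel (fromw -` box l u \<inter> space lborel)"
    by (rule emeasure_distr[OF _ borel_open[OF open_box]]) (use fromw_meas in \<open>simp only: measurable_lborel2\<close>)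
  ultimately have "emeasure (distr lborel borel fromw) (box l u) = emeasure lborel (box (tow l) (tow u))"
    by simp
  also have "\<dots> = (\<Prod>b\<in>Basis. (tow u - tow l) \<bullet> b)"
  proof -
    have lu: "\<forall>i. l $ i \<le> u $ i"
    proof
      fix i show "l $ i \<le> u $ i" using le[of "axis i 1"] by (simp add: inner_axis)
    qed
    then have "\<forall>b\<in>Basis. tow l \<bullet> b \<le> tow u \<bullet> b"
    proof (intro ballI)
      fix b :: "real^('n wo)" assume "b \<in> Basis"
      then obtain j where j: "b = axis j 1" by (auto simp: Basis_vec_def)
      show "tow l \<bullet> b \<le> tow u \<bullet> b" using lu unfolding j by (simp add: inner_axis tow_def)
    qed
    then show ?thesis by (simp add: emeasure_lborel_box_eq)
  qed
  also have "\<dots> = (\<Prod>j\<in>UNIV. u $ rep_wo j - l $ rep_wo j)"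
    unfolding prod_Basis_cart by (simp add: tow_def)
  also have "\<dots> = (\<Prod>i\<in>UNIV. u $ i - l $ i)"
    using prod.reindex_bij_betw[OF bij_rep_wo, of "\<lambda>i. u $ i - l $ i"] by simp
  also have "\<dots> = (\<Prod>b\<in>Basis. (u - l) \<bullet> b)" unfolding prod_Basis_cart ..
  finally show "emeasure (distr lborel borel fromw) (box l u) = (\<Prod>b\<in>Basis. (u - l) \<bullet> b)" .
next
  show "sets (distr lborel borel fromw) = sets (borel :: (real^'n) measure)" by simp
qed

lemma measure_le_from_emeasure:
  assumes "emeasure M A \<le> ennreal b" "b \<ge> 0"
  shows "measure M A \<le> b"
proof -
  have "emeasure M A \<noteq> top" using assms(1) by (metis ennreal_neq_top top_unique)
  then have "emeasure M A = ennreal (measure M A)" by (rule emeasure_eq_ennreal_measure)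
  then show ?thesis using assms by (simp add: ennreal_le_iff)
qed

lemma cone_compact:
  fixes x :: "'a::euclidean_space"
  shows "compact {v. norm v \<le> r \<and> c * norm x * norm v \<le> x \<bullet> v}"
proof -
  have "closed ({v. norm v \<le> r} \<inter> {v. c * norm x * norm v \<le> x \<bullet> v})"
    by (intro closed_Int closed_Collect_le continuous_intros)
  moreover have "bounded ({v. norm v \<le> r} \<inter> {v. c * norm x * norm v \<le> x \<bullet> v})"
    by (rule bounded_subset[OF bounded_cball[of 0 r]]) auto
  ultimately show ?thesis by (simp add: compact_eq_bounded_closed Collect_conj_eq)
qed

lemma cone_wo:
  fixes x :: "real^'m::{finite,wellorder}"
  assumes x: "x \<noteq> 0" and m: "CARD('m) \<ge> 3" and r: "r > 0"
    and c: "0 \<le> c" "c \<le> 1" and s: "s = sqrt (1 - c\<^sup>2)"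
  shows "measure lborel {v. norm v \<le> r \<and> c * norm x * norm v \<le> x \<bullet> v}
    \<le> unit_ball_vol (real (CARD('m) - 1)) * (r * s)^(CARD('m) - 3) * (2 / 3 * r ^ 3)"
proof -
  define k :: "'m::{finite,wellorder}" where "k = undefined"
  define a where "a = norm x *\<^sub>R axis k (1::real)"
  have na: "norm a = norm x" by (simp add: a_def)
  obtain g where g: "orthogonal_transformation g" "g a = x"
    using orthogonal_transformation_exists[OF na] by blast
  define C where "C = {w. norm w \<le> r \<and> c * norm w \<le> w \<bullet> axis k (1::real)}"
  define T where "T = {v. norm v \<le> r \<and> c * norm x * norm v \<le> x \<bullet> v}"
  have nx: "norm x > 0" using x by simp
  have sub: "T \<subseteq> g ` C"
  proof
    fix v assume v: "v \<in> T"
    obtain w where w: "v = g w" using orthogonal_transformation_surj[OF g(1)] by (metis surjD)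
    have nw: "norm w = norm v" using w g(1) by (simp add: orthogonal_transformation_norm)
    have "x \<bullet> v = a \<bullet> w" using g w by (metis orthogonal_transformation_def)
    also have "\<dots> = norm x * (w \<bullet> axis k 1)" by (simp add: a_def inner_commute)
    finally have "norm x * (c * norm w) \<le> norm x * (w \<bullet> axis k 1)" using v nw by (simp add: T_def mult_ac)
    then have "c * norm w \<le> w \<bullet> axis k 1" using nx by simp
    then have "w \<in> C" using v nw by (simp add: C_def T_def)
    then show "v \<in> g ` C" using w by blast
  qed
  have Ccomp: "compact C"
  proof -
    have "C = {v. norm v \<le> r \<and> c * norm (axis k (1::real)) * norm v \<le> axis k 1 \<bullet> v}"
      by (simp add: C_def inner_commute)
    then show ?thesis using cone_compact by metis
  qed
  have Cm: "C \<in> lmeasurable" using Ccomp by (rule lmeasurable_compact)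
  have Tm: "T \<in> lmeasurable" unfolding T_def using cone_compact by (rule lmeasurable_compact)
  have gCm: "g ` C \<in> lmeasurable" using measurable_orthogonal_image[OF g(1) Cm] .
  have "measure lborel T = measure lebesgue T"
    using Tm by (simp add: T_def compact_imp_closed cone_compact borel_closed)
  also have "\<dots> \<le> measure lebesgue (g ` C)"
    using Tm gCm sub by (intro measure_mono_fmeasurable) (auto simp: fmeasurable_def)
  also have "\<dots> = measure lebesgue C" by (rule measure_orthogonal_image[OF g(1) Cm])
  also have "\<dots> = measure lborel C" using Ccomp by (simp add: compact_imp_closed borel_closed)
  also have "\<dots> \<le> unit_ball_vol (real (CARD('m) - 1)) * (r * s)^(CARD('m) - 3) * (2 / 3 * r ^ 3)"
  proof (rule measure_le_from_emeasure)
    show "emeasure lborel C \<le> ennreal (unit_ball_vol (real (CARD('m) - 1)) * (r * s)^(CARD('m) - 3) * (2 / 3 * r ^ 3))"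
      unfolding C_def using sector_euclid[OF _ _ r c s, of "axis k (1::real)"] m by simp
    have "s \<ge> 0" using s c by (simp add: power_le_one)
    then show "0 \<le> unit_ball_vol (real (CARD('m) - 1)) * (r * s)^(CARD('m) - 3) * (2 / 3 * r ^ 3)"
      using r by simp
  qed
  finally show ?thesis unfolding T_def .
qed

lemma cone_n:
  fixes x :: "real^'n::finite"
  assumes x: "x \<noteq> 0" and m: "CARD('n) \<ge> 3" and r: "r > 0"
    and c: "0 \<le> c" "c \<le> 1" and s: "s = sqrt (1 - c\<^sup>2)"
  shows "measure lborel {v. norm v \<le> r \<and> c * norm x * norm v \<le> x \<bullet> v}
    \<le> unit_ball_vol (real (CARD('n) - 1)) * (r * s)^(CARD('n) - 3) * (2 / 3 * r ^ 3)"
proof -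
  define T where "T = {v::real^'n. norm v \<le> r \<and> c * norm x * norm v \<le> x \<bullet> v}"
  have Tb: "T \<in> sets borel" unfolding T_def using cone_compact by (intro borel_closed compact_imp_closed)
  have "measure lborel T = measure (distr lborel borel fromw) T" by (simp add: lborel_fromw)
  also have "\<dots> = measure lborel (fromw -` T \<inter> space lborel)"
    by (rule measure_distr[OF _ Tb]) (use fromw_meas in \<open>simp only: measurable_lborel2\<close>)
  also have "fromw -` T \<inter> space lborel = {w. norm w \<le> r \<and> c * norm (tow x) * norm w \<le> tow x \<bullet> w}"
  proof -
    have "x \<bullet> fromw w = tow x \<bullet> w" for w by (metis fromw_tow inner_fromw)
    then show ?thesis by (auto simp: T_def norm_fromw norm_tow)
  qed
  also have "measure lborel \<dots> \<le> unit_ball_vol (real (CARD('n wo) - 1)) * (r * s)^(CARD('n wo) - 3) * (2 / 3 * r ^ 3)"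
  proof (rule cone_wo[OF _ _ r c s])
    show "tow x \<noteq> 0" using x by (metis fromw_tow norm_eq_zero norm_fromw)
    show "3 \<le> CARD('n wo)" using m by (simp add: card_wo)
  qed
  finally show ?thesis by (simp add: card_wo T_def)
qed

lemma vol_ratio:
  assumes n: "n \<ge> (3::nat)"
  shows "unit_ball_vol (real n - 1) / unit_ball_vol (real n)
       = (real n / (real n - 1)) * (1 / sqrt pi * (Gamma (real n / 2) / Gamma ((real n - 1) / 2)))"
proof -
  define a where "a = (real n - 1) / 2"
  define b where "b = real n / 2"
  have a0: "a > 0" and b0: "b > 0" using n by (auto simp: a_def b_def)
  have ga: "Gamma (a + 1) = a * Gamma a" using a0 nonpos_Ints_nonpos[of a] by (intro Gamma_plus1) force
  have gb: "Gamma (b + 1) = b * Gamma b" using b0 nonpos_Ints_nonpos[of b] by (intro Gamma_plus1) force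
  have Ga: "Gamma a > 0" using a0 by (rule Gamma_real_pos)
  have Gb: "Gamma b > 0" using b0 by (rule Gamma_real_pos)
  have pw: "pi powr a / pi powr b = 1 / sqrt pi"
  proof -
    have "pi powr a / pi powr b = pi powr (a - b)" by (simp add: powr_diff)
    also have "a - b = - (1/2)" by (simp add: a_def b_def field_simps)
    also have "pi powr (- (1/2)) = 1 / sqrt pi"
    proof -
      have h1: "pi powr (- (1/2)) = inverse (pi powr (1/2))" by (rule powr_minus)
      have h2: "pi powr (1/2) = sqrt pi" using powr_half_sqrt[of pi] by simp
      show ?thesis by (metis h1 h2 inverse_eq_divide)
    qed
    finally show ?thesis .
  qed
  have "unit_ball_vol (real n - 1) / unit_ball_vol (real n) = (pi powr a / Gamma (a + 1)) / (pi powr b / Gamma (b + 1))"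
    by (simp add: unit_ball_vol_def a_def b_def)
  also have "\<dots> = (pi powr a / pi powr b) * (Gamma (b + 1) / Gamma (a + 1))"
    by (simp add: field_simps)
  also have "\<dots> = (1 / sqrt pi) * ((b * Gamma b) / (a * Gamma a))" by (simp add: pw ga gb)
  also have "\<dots> = (b / a) * (1 / sqrt pi * (Gamma b / Gamma a))" using a0 Ga by (simp add: field_simps)
  also have "b / a = real n / (real n - 1)" using n by (simp add: a_def b_def field_simps)
  finally show ?thesis by (simp add: a_def b_def)
qed

theorem mainTheorem8:
  fixes \<sigma> D z :: real and n :: nat and x :: "real ^ 'n"
  assumes "\<sigma>\<^sup>2 > D" and "D > 0"
    and "CARD('n) = n" and "n \<ge> 3"
    and "z > 0" and "z + \<sigma>\<^sup>2 - 2 * D \<ge> 0" and "hfun \<sigma> D z \<le> 1"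
    and "(norm x)\<^sup>2 / real n = z"
  shows "measure (unif_sphere (sqrt (real n * (\<sigma>\<^sup>2 - D)))) {y. (norm (x - y))\<^sup>2 \<le> real n * D}
     \<le> 1 / sqrt pi * (Gamma (real n / 2) / Gamma ((real n - 1) / 2))
        * (sqrt (1 - hfun \<sigma> D z)) ^ (n - 3)"
proof -
  note sig = assms(1) and D0 = assms(2) and card = assms(3) and n3 = assms(4) and z0 = assms(5)
    and zz = assms(6) and h1 = assms(7) and nx0 = assms(8)
  have npos: "real n > 0" using n3 by simp
  define P where "P = \<sigma>\<^sup>2 - D"
  have P0: "P > 0" using sig by (simp add: P_def)
  define r where "r = sqrt (real n * (\<sigma>\<^sup>2 - D))"
  have rP: "r = sqrt (real n * P)" by (simp add: r_def P_def)
  have r0: "r > 0" using npos P0 by (simp add: rP)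
  have r2: "r\<^sup>2 = real n * P" using npos P0 by (simp add: rP)
  have zP: "z * P > 0" using z0 P0 by simp
  define c where "c = (z + P - D) / (2 * sqrt (z * P))"
  have num0: "z + P - D \<ge> 0" using zz by (simp add: P_def)
  have c0: "c \<ge> 0" unfolding c_def using num0 zP by simp
  have hc: "hfun \<sigma> D z = c\<^sup>2"
  proof -
    have "c\<^sup>2 = (z + P - D)\<^sup>2 / (2 * sqrt (z * P))\<^sup>2" by (simp add: c_def power_divide)
    also have "(2 * sqrt (z * P))\<^sup>2 = 4 * z * P" using zP by (simp add: power_mult_distrib)
    finally show ?thesis by (simp add: hfun_def Let_def P_def)
  qed
  have c1: "c \<le> 1"
  proof (rule ccontr)
    assume "\<not> c \<le> 1"
    then have "1 < c\<^sup>2" by (simp add: one_less_power)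
    then show False using h1 hc by simp
  qed
  define s where "s = sqrt (1 - c\<^sup>2)"
  have s0: "s \<ge> 0" using c0 c1 by (simp add: s_def power_le_one)
  have sh: "sqrt (1 - hfun \<sigma> D z) = s" by (simp add: s_def hc)
  have nxsq: "(norm x)\<^sup>2 = real n * z" using nx0 npos by (simp add: field_simps)
  have nx: "norm x = sqrt (real n * z)" using nxsq by (metis norm_ge_zero real_sqrt_abs abs_of_nonneg)
  have x0: "x \<noteq> 0" using nxsq npos z0 by auto
  have key: "c * norm x * (2 * r) = real n * (z + P - D)"
  proof -
    have "sqrt (real n * z) * sqrt (real n * P) = sqrt ((real n)\<^sup>2 * (z * P))"
      by (simp add: real_sqrt_mult[symmetric] power2_eq_square mult_ac)
    also have "\<dots> = real n * sqrt (z * P)" by (simp add: real_sqrt_mult)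
    finally have sq: "sqrt (real n * z) * sqrt (real n * P) = real n * sqrt (z * P)" .
    have sq0: "sqrt (z * P) > 0" using zP by simp
    have "c * norm x * (2 * r) = c * 2 * (sqrt (real n * z) * sqrt (real n * P))"
      by (simp add: nx rP mult_ac)
    also have "\<dots> = c * 2 * (real n * sqrt (z * P))" by (simp only: sq)
    also have "\<dots> = real n * (c * (2 * sqrt (z * P)))" by (simp add: mult_ac)
    also have "c * (2 * sqrt (z * P)) = z + P - D" unfolding c_def using sq0 z0 P0 by simp
    finally show ?thesis .
  qed
  define proj where "proj = (\<lambda>v::real^'n. (r / norm v) *\<^sub>R v)"
  define Sy where "Sy = {y::real^'n. (norm (x - y))\<^sup>2 \<le> real n * D}"
  define U where "U = uniform_measure lborel (ball (0::real^'n) r)"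
  define T where "T = {v::real^'n. norm v \<le> r \<and> c * norm x * norm v \<le> x \<bullet> v}"
  have projb: "proj \<in> borel_measurable borel" unfolding proj_def by measurable
  have projm: "proj \<in> measurable U borel"
  proof -
    have "measurable U borel = measurable borel borel"
      by (rule measurable_cong_sets) (simp_all add: U_def)
    then show ?thesis using projb by metis
  qed
  have Syb: "Sy \<in> sets borel" unfolding Sy_def
    by (intro borel_closed closed_Collect_le continuous_intros)
  have "measure (unif_sphere (sqrt (real n * (\<sigma>\<^sup>2 - D)))) {y. (norm (x - y))\<^sup>2 \<le> real n * D}
      = measure U (proj -` Sy \<inter> space U)"
    unfolding unif_sphere_def r_def[symmetric] U_def[symmetric] Sy_def[symmetric]
    unfolding proj_def[symmetric]
    by (rule measure_distr[OF projm Syb])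
  also have "proj -` Sy \<inter> space U = proj -` Sy" by (simp add: U_def)
  also have "measure U (proj -` Sy) = measure lborel (ball 0 r \<inter> proj -` Sy) / measure lborel (ball (0::real^'n) r)"
    unfolding U_def
  proof (rule measure_uniform_measure)
    have "emeasure lborel (ball (0::real^'n) r) = ennreal (unit_ball_vol (real n) * r ^ n)"
      using emeasure_ball[of r "0::real^'n"] r0 card by simp
    then show "emeasure lborel (ball (0::real^'n) r) \<noteq> 0" "emeasure lborel (ball (0::real^'n) r) \<noteq> \<infinity>"
      using mult_pos_pos[OF unit_ball_vol_pos[of "real n", OF of_nat_0_le_iff] zero_less_power[OF r0, of n]]
      by (simp_all add: ennreal_eq_0_iff)
    have "proj -` Sy \<inter> space borel \<in> sets borel" using projb Syb by (rule measurable_sets)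
    then show "proj -` Sy \<in> sets lborel" by simp
  qed
  also have "\<dots> \<le> measure lborel T / (unit_ball_vol (real n) * r ^ n)"
  proof -
    have vb: "measure lborel (ball (0::real^'n) r) = unit_ball_vol (real n) * r ^ n"
      using content_ball[of r "0::real^'n"] r0 card by simp
    have sub: "ball 0 r \<inter> proj -` Sy \<subseteq> T"
    proof
      fix v assume v: "v \<in> ball 0 r \<inter> proj -` Sy"
      show "v \<in> T"
      proof (cases "v = 0")
        case True then show ?thesis using r0 by (simp add: T_def)
      next
        case False
        then have nv: "norm v > 0" by simp
        define p where "p = (r / norm v) *\<^sub>R v"
        have np: "norm p = r" using nv r0 by (simp add: p_def)
        have xp: "x \<bullet> p = (r / norm v) * (x \<bullet> v)" by (simp add: p_def)
        have "(norm (x - p))\<^sup>2 \<le> real n * D" using v by (simp add: Sy_def proj_def p_def)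
        moreover have "(norm (x - p))\<^sup>2 = (norm x)\<^sup>2 - 2 * (x \<bullet> p) + (norm p)\<^sup>2"
          by (simp add: power2_norm_eq_inner inner_diff_left inner_diff_right inner_commute)
        ultimately have "real n * z - 2 * ((r / norm v) * (x \<bullet> v)) + real n * P \<le> real n * D"
          using nxsq np r2 xp by simp
        then have "real n * (z + P - D) \<le> 2 * ((r / norm v) * (x \<bullet> v))" by (simp add: algebra_simps)
        moreover have "2 * ((r / norm v) * (x \<bullet> v)) = (2 * r) * ((x \<bullet> v) / norm v)"
          using nv by (simp add: field_simps)
        moreover have "(2 * r) * (c * norm x) = real n * (z + P - D)" using key by (simp add: mult_ac)
        ultimately have "(2 * r) * (c * norm x) \<le> (2 * r) * ((x \<bullet> v) / norm v)" by linarith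
        then have "c * norm x \<le> (x \<bullet> v) / norm v" by (rule mult_left_le_imp_le) (use r0 in simp)
        then have "c * norm x * norm v \<le> x \<bullet> v" using nv by (simp add: pos_le_divide_eq)
        moreover have "norm v \<le> r" using v by (simp add: dist_norm)
        ultimately show ?thesis by (simp add: T_def)
      qed
    qed
    have Tc: "compact T" unfolding T_def by (rule cone_compact)
    have ballb: "ball 0 r \<inter> proj -` Sy \<in> sets borel"
    proof -
      have "proj -` Sy \<inter> space borel \<in> sets borel" using projb Syb by (rule measurable_sets)
      then show ?thesis by simp
    qed
    have "measure lborel (ball 0 r \<inter> proj -` Sy) = measure lebesgue (ball 0 r \<inter> proj -` Sy)"
      using ballb by simp
    also have "\<dots> \<le> measure lebesgue T"
      using lmeasurable_compact[OF Tc] sub ballb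
      by (intro measure_mono_fmeasurable) (auto simp: fmeasurable_def)
    also have "\<dots> = measure lborel T" using Tc by (simp add: compact_imp_closed borel_closed)
    finally have "measure lborel (ball 0 r \<inter> proj -` Sy) \<le> measure lborel T" .
    then show ?thesis unfolding vb using r0 by (intro divide_right_mono) simp_all
  qed
  also have "\<dots> \<le> (unit_ball_vol (real (n - 1)) * (r * s)^(n - 3) * (2 / 3 * r ^ 3)) / (unit_ball_vol (real n) * r ^ n)"
  proof (intro divide_right_mono)
    show "measure lborel T \<le> unit_ball_vol (real (n - 1)) * (r * s)^(n - 3) * (2 / 3 * r ^ 3)"
      unfolding T_def using cone_n[OF x0 _ r0 c0 c1 s_def] n3 card by simp
    show "0 \<le> unit_ball_vol (real n) * r ^ n" using r0 by simp
  qed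
  also have "\<dots> = (2 / 3) * (unit_ball_vol (real n - 1) / unit_ball_vol (real n)) * s ^ (n - 3)"
  proof -
    have h: "r ^ n = r ^ 3 * r ^ (n - 3)" using n3 by (simp add: power_add[symmetric])
    have e1: "real (n - 1) = real n - 1" using n3 by simp
    have Vp: "unit_ball_vol (real n) > 0" by simp
    have r3: "r ^ 3 > 0" "r ^ (n - 3) > 0" using r0 by simp_all
    show ?thesis unfolding h e1 using Vp r3 by (simp add: field_simps power_mult_distrib)
  qed
  also have "\<dots> = (2 / 3) * (real n / (real n - 1)) * (1 / sqrt pi * (Gamma (real n / 2) / Gamma ((real n - 1) / 2))) * s ^ (n - 3)"
    by (simp only: vol_ratio[OF n3] mult.assoc)
  also have "\<dots> \<le> 1 / sqrt pi * (Gamma (real n / 2) / Gamma ((real n - 1) / 2)) * s ^ (n - 3)"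
  proof -
    define G where "G = 1 / sqrt pi * (Gamma (real n / 2) / Gamma ((real n - 1) / 2)) * s ^ (n - 3)"
    have G0: "G \<ge> 0" unfolding G_def using s0 n3
      by (intro mult_nonneg_nonneg divide_nonneg_nonneg Gamma_real_nonneg zero_le_power) auto
    have f: "(2 / 3) * (real n / (real n - 1)) \<le> 1" using n3 by (simp add: field_simps)
    have "(2 / 3) * (real n / (real n - 1)) * G \<le> 1 * G" using f G0 by (rule mult_right_mono)
    then show ?thesis by (simp add: G_def mult_ac)
  qed
  finally show ?thesis by (simp add: sh)
qed

end
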